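(* Let $d\ge1$, $\ell\ge 2$, and let $u,v$ be vertices of the cyclic Kautz digraph $CK(d,\ell)$. There is a directed path from $u$ to $v$ in $CK(d,\ell)$ if and only if $v$ can be obtained from $u$ by a finite sequence of the following operations: (i) rotation, replacing $a_1a_2\ldots a_\ell$ by $a_2\ldots a_\ell a_1$; (ii) valid swap, replacing a single symbol $a_i$ by a symbol $x\in\Sigma$ that differs from both cyclic neighbours $a_{i-1}$ and $a_{i+1}$ (indices taken cyclically modulo $\ell$).
   Context: Let $\Sigma=\{0,1,\dots,d\}$. The cyclic Kautz digraph $CK(d,\ell)$ has as vertices all sequences $a_1\ldots a_\ell\in\Sigma^\ell$ with $a_i\neq a_{i+1}$ for $1\le i\le \ell-1$ and $a_1\neq a_\ell$, with an arc from $a_1\ldots a_\ell$ to $b_1\ldots b_\ell$ iff both are vertices and $b_i=a_{i+1}$ for $1\le i\le\ell-1$. Both operations map vertices of $CK(d,\ell)$ to vertices of $CK(d,\ell)$ (a vertex can be viewed as a cyclic arrangement of symbols on a disc with a marked starting position; rotation moves the marked position). *)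

theory Defs
  imports Main
begin

text \<open>Alphabet Sigma = {0,...,d}; vertices of CK(d,l) are lists of length l.\<close>

definition ck_vertex :: "nat \<Rightarrow> nat \<Rightarrow> nat list \<Rightarrow> bool" where
  "ck_vertex d l a \<longleftrightarrow> length a = l \<and> (\<forall>i<l. a ! i \<le> d)
     \<and> (\<forall>i. i + 1 < l \<longrightarrow> a ! i \<noteq> a ! (i + 1))
     \<and> a ! 0 \<noteq> a ! (l - 1)"

definition ck_arc :: "nat \<Rightarrow> nat \<Rightarrow> nat list \<Rightarrow> nat list \<Rightarrow> bool" where
  "ck_arc d l a b \<longleftrightarrow> ck_vertex d l a \<and> ck_vertex d l b
     \<and> (\<forall>i. i + 1 < l \<longrightarrow> b ! i = a ! (i + 1))"

definition ck_rotation :: "nat list \<Rightarrow> nat list" where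
  "ck_rotation a = rotate1 a"

definition ck_valid_swap :: "nat \<Rightarrow> nat \<Rightarrow> nat list \<Rightarrow> nat list \<Rightarrow> bool" where
  "ck_valid_swap d l a b \<longleftrightarrow> (\<exists>i x. i < l \<and> x \<le> d
      \<and> x \<noteq> a ! ((i + l - 1) mod l) \<and> x \<noteq> a ! ((i + 1) mod l)
      \<and> b = a[i := x])"

definition ck_op :: "nat \<Rightarrow> nat \<Rightarrow> nat list \<Rightarrow> nat list \<Rightarrow> bool" where
  "ck_op d l a b \<longleftrightarrow> b = ck_rotation a \<or> ck_valid_swap d l a b"

end

theory Submission
  imports Defs
begin

lemma vert_cyc:
  assumes "l \<ge> 2"
  shows "ck_vertex d l a \<longleftrightarrow> length a = l \<and> (\<forall>i<l. a!i \<le> d \<and> a!i \<noteq> a!((i+1) mod l))"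
proof
  assume h: "ck_vertex d l a"
  show "length a = l \<and> (\<forall>i<l. a!i \<le> d \<and> a!i \<noteq> a!((i+1) mod l))"
  proof (intro conjI allI impI)
    show "length a = l" using h by (simp add: ck_vertex_def)
    fix i assume i: "i < l"
    show "a!i \<le> d" using h i by (simp add: ck_vertex_def)
    show "a!i \<noteq> a!((i+1) mod l)"
    proof (cases "i + 1 < l")
      case True then show ?thesis using h by (simp add: ck_vertex_def)
    next
      case False
      then have e: "i = l - 1" "i + 1 = l" using i by auto
      then have "(i+1) mod l = 0" by simp
      then show ?thesis using h e by (auto simp add: ck_vertex_def)
    qed
  qed
next
  assume h: "length a = l \<and> (\<forall>i<l. a!i \<le> d \<and> a!i \<noteq> a!((i+1) mod l))"
  have "a ! (l-1) \<noteq> a ! 0" using h[THEN conjunct2, rule_format, of "l-1"] assms by auto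
  moreover have "\<forall>i. i + 1 < l \<longrightarrow> a ! i \<noteq> a ! (i + 1)"
    using h by (metis add_lessD1 mod_less)
  ultimately show "ck_vertex d l a" using h by (auto simp: ck_vertex_def)
qed

lemma rot_vertex:
  assumes "l \<ge> 2" "ck_vertex d l a"
  shows "ck_vertex d l (rotate k a)"
proof -
  have len: "length a = l" and c: "\<And>i. i<l \<Longrightarrow> a!i \<le> d \<and> a!i \<noteq> a!((i+1) mod l)"
    using assms by (auto simp: vert_cyc)
  have "\<forall>i<l. rotate k a ! i \<le> d \<and> rotate k a ! i \<noteq> rotate k a ! ((i+1) mod l)"
  proof (intro allI impI)
    fix i assume i: "i < l"
    have l0: "l > 0" using assms by simp
    have e1: "rotate k a ! i = a ! ((k+i) mod l)" using i len by (simp add: nth_rotate)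
    have e2: "rotate k a ! ((i+1) mod l) = a ! ((k + (i+1) mod l) mod l)"
      using l0 len by (simp add: nth_rotate)
    have "(k + (i+1) mod l) mod l = ((k+i) mod l + 1) mod l"
      by (metis add.assoc mod_add_left_eq mod_add_right_eq)
    then show "rotate k a ! i \<le> d \<and> rotate k a ! i \<noteq> rotate k a ! ((i+1) mod l)"
      using e1 e2 c[of "(k+i) mod l"] l0 by auto
  qed
  then show ?thesis using assms len by (simp add: vert_cyc)
qed

lemma rot_arc:
  assumes "l \<ge> 2" "ck_vertex d l a"
  shows "ck_arc d l a (rotate1 a)"
proof -
  have len: "length a = l" using assms by (simp add: ck_vertex_def)
  have "ck_vertex d l (rotate 1 a)" using rot_vertex assms by blast
  moreover have "\<forall>i. i + 1 < l \<longrightarrow> rotate1 a ! i = a ! (i + 1)"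
    using len nth_rotate[of _ a 1] by simp
  ultimately show ?thesis using assms by (simp add: ck_arc_def)
qed

lemma rot_path:
  assumes "l \<ge> 2" "ck_vertex d l a"
  shows "(ck_arc d l)\<^sup>*\<^sup>* a (rotate k a)"
proof (induction k)
  case 0 then show ?case by simp
next
  case (Suc k)
  have "ck_arc d l (rotate k a) (rotate1 (rotate k a))"
    using rot_arc rot_vertex assms by blast
  then show ?case using Suc by (simp add: rtranclp.rtrancl_into_rtrancl)
qed

lemma swap_vertex:
  assumes "l \<ge> 2" "ck_vertex d l a" "ck_valid_swap d l a b"
  shows "ck_vertex d l b"
proof -
  obtain i x where ix: "i < l" "x \<le> d" "x \<noteq> a ! ((i + l - 1) mod l)" "x \<noteq> a ! ((i + 1) mod l)"
    "b = a[i := x]" using assms(3) by (auto simp: ck_valid_swap_def)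
  have len: "length a = l" and c: "\<And>j. j<l \<Longrightarrow> a!j \<le> d \<and> a!j \<noteq> a!((j+1) mod l)"
    using assms by (auto simp: vert_cyc)
  have "\<forall>j<l. b!j \<le> d \<and> b!j \<noteq> b!((j+1) mod l)"
  proof (intro allI impI)
    fix j assume j: "j < l"
    have jl: "(j+1) mod l < l" using j by simp
    show "b!j \<le> d \<and> b!j \<noteq> b!((j+1) mod l)"
    proof (cases "j = i")
      case True
      have "(j+1) mod l \<noteq> i"
      proof (cases "j + 1 < l")
        case True then show ?thesis using \<open>j = i\<close> by simp
      next
        case False then have "j + 1 = l" using j by simp
        then show ?thesis using \<open>j = i\<close> assms(1) by simp
      qed
      then show ?thesis using True ix len j jl by simp
    next
      case False
      show ?thesis
      proof (cases "(j+1) mod l = i")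
        case True
        have "(i + l - 1) mod l = j"
        proof (cases "j + 1 < l")
          case True2: True
          then have "i = j+1" using True by simp
          then show ?thesis using True2 by simp
        next
          case False2: False
          then have jl1: "j + 1 = l" using j by simp
          then have "j = l - 1" "i = 0" using True by auto
          then show ?thesis using assms(1) by simp
        qed
        then show ?thesis using True False ix len j c[of j] by simp
      next
        case False2: False
        then show ?thesis using False ix len j jl c[of j] by simp
      qed
    qed
  qed
  then show ?thesis using assms(1) len ix by (simp add: vert_cyc)
qed


lemma arc_op:
  assumes "l \<ge> 2" "ck_arc d l a b"
  shows "(ck_op d l)\<^sup>*\<^sup>* a b"
proof -
  have va: "ck_vertex d l a" and vb: "ck_vertex d l b"
    and sh: "\<And>j. j + 1 < l \<Longrightarrow> b ! j = a ! (j+1)" using assms by (auto simp: ck_arc_def)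
  have la: "length a = l" and lb: "length b = l" using va vb by (auto simp: ck_vertex_def)
  define r where "r = rotate1 a"
  have lr: "length r = l" using la r_def by simp
  have rn: "\<And>j. j + 1 < l \<Longrightarrow> r ! j = b ! j"
  proof -
    fix j assume j: "j + 1 < l"
    have "r ! j = a ! ((1 + j) mod l)" using r_def la j nth_rotate[of j a 1] by simp
    also have "... = a ! (j+1)" using j by simp
    finally show "r ! j = b ! j" using sh[OF j] by simp
  qed
  define x where "x = b ! (l-1)"
  have e1: "(l - 1 + l - 1) mod l = l - 2"
  proof -
    have "l - 1 + l - 1 = (l - 2) + l" using assms(1) by simp
    then have "(l - 1 + l - 1) mod l = ((l - 2) + l) mod l" by simp
    also have "... = (l - 2) mod l" by (rule mod_add_self2)
    also have "... = l - 2" using assms(1) by simp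
    finally show ?thesis .
  qed
  have e2: "(l - 1 + 1) mod l = 0" using assms(1) by simp
  have x1: "x \<le> d" using vb assms(1) by (simp add: ck_vertex_def x_def)
  have x2: "x \<noteq> r ! (l - 2)"
  proof -
    have "r ! (l-2) = b ! (l-2)" using rn[of "l-2"] assms(1) by simp
    moreover have "b ! (l-2) \<noteq> b ! (l - 2 + 1)" using vb assms(1) by (simp add: ck_vertex_def)
    moreover have "l - 2 + 1 = l - 1" using assms(1) by simp
    ultimately show ?thesis by (simp add: x_def)
  qed
  have x3: "x \<noteq> r ! 0"
  proof -
    have "r ! 0 = b ! 0" using rn[of 0] assms(1) by simp
    then show ?thesis using vb by (simp add: ck_vertex_def x_def)
  qed
  have beq: "b = r[l-1 := x]"
  proof (rule nth_equalityI)
    show "length b = length (r[l - 1 := x])" using lb lr by simp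
    fix j assume "j < length b"
    then have j: "j < l" using lb by simp
    show "b ! j = r[l - 1 := x] ! j"
    proof (cases "j = l - 1")
      case True then show ?thesis using lr j by (simp add: x_def)
    next
      case False then have "j + 1 < l" using j by simp
      then show ?thesis using rn False by simp
    qed
  qed
  have "ck_valid_swap d l r b" unfolding ck_valid_swap_def
    using assms(1) x1 x2 x3 e1 e2 beq by (intro exI[of _ "l-1"] exI[of _ x]) auto
  then have "ck_op d l r b" by (simp add: ck_op_def)
  moreover have "ck_op d l a r" by (simp add: ck_op_def ck_rotation_def r_def)
  ultimately show ?thesis by (meson rtranclp.rtrancl_into_rtrancl rtranclp.rtrancl_refl)
qed

lemma swap_path:
  assumes "l \<ge> 2" "ck_vertex d l a" "ck_valid_swap d l a b"
  shows "(ck_arc d l)\<^sup>*\<^sup>* a b"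
proof -
  obtain i x where ix: "i < l" "b = a[i := x]" using assms(3) by (auto simp: ck_valid_swap_def)
  have vb: "ck_vertex d l b" using swap_vertex assms by blast
  have la: "length a = l" and lb: "length b = l" using assms(2) vb by (auto simp: ck_vertex_def)
  have p1: "(ck_arc d l)\<^sup>*\<^sup>* a (rotate i a)" using rot_path assms by blast
  have "ck_arc d l (rotate i a) (rotate (Suc i) b)"
    unfolding ck_arc_def
  proof (intro conjI allI impI)
    show "ck_vertex d l (rotate i a)" using rot_vertex assms by blast
    show "ck_vertex d l (rotate (Suc i) b)" using rot_vertex assms(1) vb by blast
    fix j assume j: "j + 1 < l"
    have r1: "rotate (Suc i) b ! j = b ! ((Suc i + j) mod l)" using lb j nth_rotate[of j b "Suc i"] by (simp del: rotate_Suc)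
    have r2: "rotate i a ! (j+1) = a ! ((i + (j+1)) mod l)" using la j by (simp add: nth_rotate)
    have ne: "(i + j + 1) mod l \<noteq> i"
    proof (cases "i + j + 1 < l")
      case True then show ?thesis by simp
    next
      case False
      then have "i + j + 1 = (i + j + 1 - l) + l" by simp
      then have "(i + j + 1) mod l = (i + j + 1 - l) mod l" by (metis mod_add_self2)
      also have "... = i + j + 1 - l" using ix(1) j by simp
      finally show ?thesis using j False by linarith
    qed
    have lt: "(i + j + 1) mod l < l" using j by simp
    show "rotate (Suc i) b ! j = rotate i a ! (j + 1)"
      using r1 r2 ne lt ix(2) la by (simp add: add.commute add.left_commute)
  qed
  moreover have "(ck_arc d l)\<^sup>*\<^sup>* (rotate (Suc i) b) (rotate (l - Suc i) (rotate (Suc i) b))"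
    using rot_path assms(1) rot_vertex vb by blast
  moreover have "rotate (l - Suc i) (rotate (Suc i) b) = b"
  proof -
    have "rotate (l - Suc i) (rotate (Suc i) b) = rotate (l - Suc i + Suc i) b"
      by (simp only: rotate_rotate)
    also have "l - Suc i + Suc i = length b" using ix(1) lb by simp
    finally show ?thesis by (simp only: rotate_length01 rotate_id mod_self)
  qed
  ultimately show ?thesis using p1
    by (metis (no_types, lifting) rtranclp.rtrancl_into_rtrancl rtranclp_trans)
qed

lemma op_path:
  assumes "l \<ge> 2" "(ck_op d l)\<^sup>*\<^sup>* u v" "ck_vertex d l u"
  shows "(ck_arc d l)\<^sup>*\<^sup>* u v \<and> ck_vertex d l v"
  using assms(2)
proof (induction rule: rtranclp_induct)
  case base then show ?case using assms by simp
next
  case (step y z)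
  then have vy: "ck_vertex d l y" and py: "(ck_arc d l)\<^sup>*\<^sup>* u y" by auto
  from step(2) show ?case
    unfolding ck_op_def
  proof
    assume "z = ck_rotation y"
    then have "ck_arc d l y z" using rot_arc assms(1) vy by (simp add: ck_rotation_def)
    then have "ck_vertex d l z" by (simp add: ck_arc_def)
    with rtranclp.rtrancl_into_rtrancl[OF py \<open>ck_arc d l y z\<close>] show ?thesis by blast
  next
    assume sw: "ck_valid_swap d l y z"
    then show ?thesis using py swap_path swap_vertex assms(1) vy
      by (meson rtranclp_trans)
  qed
qed

theorem lemma3:
  fixes d l :: nat and u v :: "nat list"
  assumes "d \<ge> 1" and "l \<ge> 2"
    and "ck_vertex d l u" and "ck_vertex d l v"
  shows "(ck_arc d l)\<^sup>*\<^sup>* u v \<longleftrightarrow> (ck_op d l)\<^sup>*\<^sup>* u v"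
proof
  assume "(ck_arc d l)\<^sup>*\<^sup>* u v"
  then show "(ck_op d l)\<^sup>*\<^sup>* u v"
  proof (induction rule: rtranclp_induct)
    case base then show ?case by simp
  next
    case (step y z)
    then show ?case using arc_op assms(2) by (meson rtranclp_trans)
  qed
next
  assume "(ck_op d l)\<^sup>*\<^sup>* u v"
  then show "(ck_arc d l)\<^sup>*\<^sup>* u v" using op_path assms by blast
qed

end
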